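(* Let $\Gamma=(G,w,\ell)$ be a tropical curve and $P\in\mathcal C_G$. Then the class $[T_P]$ contains no effective divisor (i.e. $r_\Gamma(T_P)=-1$) if and only if $P=\emptyset$ and $\Gamma$ is pure (i.e. $w(v)=0$ for all $v\in V$).
   Context: A tropical curve is a triple $\Gamma=(G,w,\ell)$ where $G=(V,E)$ is a finite connected graph (loops and multiple edges allowed), $w\colon V\to\mathbb Z_{\ge 0}$ with $2w(v)-2+\deg_G(v)>0$ for all $v$ (loops count twice), and $\ell\colon E\to\mathbb R_{>0}$; it is viewed as a metric space with edges segments (circles for loops) of length $\ell(e)$; $p_e$ is the mid-point of $e$. Divisors, rational functions and linear equivalence are the usual tropical ones; the rank $r_\Gamma(D)$ equals $-1$ exactly when $D$ is not linearly equivalent to any effective divisor. $\mathcal C_G$ is the set of $P\subseteq E$ such that every vertex has even degree in the subgraph spanned by $P$ (loops counting twice). For $P\in\mathcal C_G$, $$T_P:=\sum_{v\in V}\Big(\frac{\deg_P(v)}{2}-1+w(v)\Big)v+\sum_{e\in E\setminus P}p_e,$$ whose class is a theta-characteristic of $\Gamma$. *)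

theory Defs
  imports Complex_Main
begin

text \<open>The graph G has vertex set V, edge set E,
  and each edge e has two (possibly equal) endpoints src e and tgt e (an arbitrary
  orientation, used only to parametrise e as the segment [0, l e]).  Loops are
  edges with src e = tgt e, multiple edges are distinct elements of E.\<close>

definition deg_in :: "'e set \<Rightarrow> ('e \<Rightarrow> 'v) \<Rightarrow> ('e \<Rightarrow> 'v) \<Rightarrow> 'v \<Rightarrow> nat" where
  "deg_in P src tgt v = card {e\<in>P. src e = v} + card {e\<in>P. tgt e = v}"
  \<comment> \<open>degree of v in the subgraph spanned by P; loops count twice\<close>

definition graph_connected :: "'v set \<Rightarrow> 'e set \<Rightarrow> ('e \<Rightarrow> 'v) \<Rightarrow> ('e \<Rightarrow> 'v) \<Rightarrow> bool" where
  "graph_connected V E src tgt \<longleftrightarrow>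
     (\<forall>u\<in>V. \<forall>v\<in>V. (u, v) \<in> ({(src e, tgt e) | e. e \<in> E} \<union> {(tgt e, src e) | e. e \<in> E})\<^sup>*)"

definition tropical_curve ::
  "'v set \<Rightarrow> 'e set \<Rightarrow> ('e \<Rightarrow> 'v) \<Rightarrow> ('e \<Rightarrow> 'v) \<Rightarrow> ('v \<Rightarrow> nat) \<Rightarrow> ('e \<Rightarrow> real) \<Rightarrow> bool" where
  "tropical_curve V E src tgt w l \<longleftrightarrow>
     finite V \<and> V \<noteq> {} \<and> finite E \<and> (\<forall>e\<in>E. src e \<in> V \<and> tgt e \<in> V) \<and>
     graph_connected V E src tgt \<and>
     (\<forall>v\<in>V. 2 * int (w v) - 2 + int (deg_in E src tgt v) > 0) \<and>
     (\<forall>e\<in>E. l e > 0)"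

text \<open>Points of the metric space Gamma: vertices, and interior points of edges
  (Pt e t is the point of e at distance t from src e, 0 < t < l e).\<close>

datatype ('v, 'e) tpoint = Vtx 'v | Pt 'e real

definition tpoints :: "'v set \<Rightarrow> 'e set \<Rightarrow> ('e \<Rightarrow> real) \<Rightarrow> ('v, 'e) tpoint set" where
  "tpoints V E l = Vtx ` V \<union> {Pt e t | e t. e \<in> E \<and> 0 < t \<and> t < l e}"

definition midpoint_of :: "('e \<Rightarrow> real) \<Rightarrow> 'e \<Rightarrow> ('v, 'e) tpoint" where
  "midpoint_of l e = Pt e (l e / 2)"

definition edge_fun :: "('e \<Rightarrow> 'v) \<Rightarrow> ('e \<Rightarrow> 'v) \<Rightarrow> ('e \<Rightarrow> real) \<Rightarrow> (('v, 'e) tpoint \<Rightarrow> real)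
    \<Rightarrow> 'e \<Rightarrow> real \<Rightarrow> real" where
  "edge_fun src tgt l f e t =
     (if t \<le> 0 then f (Vtx (src e)) else if t \<ge> l e then f (Vtx (tgt e)) else f (Pt e t))"

text \<open>Rational functions: continuous, piecewise linear with integer slopes and
  finitely many pieces on every edge.\<close>

definition rational_fun ::
  "'e set \<Rightarrow> ('e \<Rightarrow> 'v) \<Rightarrow> ('e \<Rightarrow> 'v) \<Rightarrow> ('e \<Rightarrow> real) \<Rightarrow> (('v, 'e) tpoint \<Rightarrow> real) \<Rightarrow> bool" where
  "rational_fun E src tgt l f \<longleftrightarrow>
     (\<forall>e\<in>E. \<exists>(a :: nat \<Rightarrow> real) (k :: nat) (s :: nat \<Rightarrow> int).
        a 0 = 0 \<and> a k = l e \<and> (\<forall>i<k. a i < a (Suc i)) \<and>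
        (\<forall>i<k. \<forall>t\<in>{a i..a (Suc i)}.
            edge_fun src tgt l f e t = edge_fun src tgt l f e (a i) + of_int (s i) * (t - a i)))"

definition out_slope :: "(real \<Rightarrow> real) \<Rightarrow> real \<Rightarrow> int" where
  "out_slope g t = (THE s :: int. \<forall>\<^sub>F h in at_right 0. g (t + h) = g t + of_int s * h)"

definition div_fun ::
  "'e set \<Rightarrow> ('e \<Rightarrow> 'v) \<Rightarrow> ('e \<Rightarrow> 'v) \<Rightarrow> ('e \<Rightarrow> real) \<Rightarrow> (('v, 'e) tpoint \<Rightarrow> real)
     \<Rightarrow> ('v, 'e) tpoint \<Rightarrow> int" where
  "div_fun E src tgt l f x =
     (case x of
        Vtx v \<Rightarrow> (\<Sum>e\<in>{e\<in>E. src e = v}. out_slope (edge_fun src tgt l f e) 0)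
               + (\<Sum>e\<in>{e\<in>E. tgt e = v}. out_slope (\<lambda>t. edge_fun src tgt l f e (l e - t)) 0)
      | Pt e t \<Rightarrow> out_slope (edge_fun src tgt l f e) t
               + out_slope (\<lambda>u. edge_fun src tgt l f e (- u)) (- t))"

definition is_divisor :: "'v set \<Rightarrow> 'e set \<Rightarrow> ('e \<Rightarrow> real) \<Rightarrow> (('v, 'e) tpoint \<Rightarrow> int) \<Rightarrow> bool" where
  "is_divisor V E l D \<longleftrightarrow> finite {x. D x \<noteq> 0} \<and> {x. D x \<noteq> 0} \<subseteq> tpoints V E l"

definition effective_on :: "'v set \<Rightarrow> 'e set \<Rightarrow> ('e \<Rightarrow> real) \<Rightarrow> (('v, 'e) tpoint \<Rightarrow> int) \<Rightarrow> bool" where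
  "effective_on V E l D \<longleftrightarrow> (\<forall>x\<in>tpoints V E l. D x \<ge> 0)"

definition lin_equiv ::
  "'v set \<Rightarrow> 'e set \<Rightarrow> ('e \<Rightarrow> 'v) \<Rightarrow> ('e \<Rightarrow> 'v) \<Rightarrow> ('e \<Rightarrow> real)
     \<Rightarrow> (('v, 'e) tpoint \<Rightarrow> int) \<Rightarrow> (('v, 'e) tpoint \<Rightarrow> int) \<Rightarrow> bool" where
  "lin_equiv V E src tgt l D D' \<longleftrightarrow>
     (\<exists>f. rational_fun E src tgt l f \<and>
          (\<forall>x\<in>tpoints V E l. D' x = D x + div_fun E src tgt l f x))"

definition rank_neg1 ::
  "'v set \<Rightarrow> 'e set \<Rightarrow> ('e \<Rightarrow> 'v) \<Rightarrow> ('e \<Rightarrow> 'v) \<Rightarrow> ('e \<Rightarrow> real)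
     \<Rightarrow> (('v, 'e) tpoint \<Rightarrow> int) \<Rightarrow> bool" where
  "rank_neg1 V E src tgt l D \<longleftrightarrow>
     \<not> (\<exists>D'. is_divisor V E l D' \<and> effective_on V E l D' \<and> lin_equiv V E src tgt l D D')"

definition even_subgraph :: "'v set \<Rightarrow> 'e set \<Rightarrow> ('e \<Rightarrow> 'v) \<Rightarrow> ('e \<Rightarrow> 'v) \<Rightarrow> 'e set \<Rightarrow> bool" where
  "even_subgraph V E src tgt P \<longleftrightarrow> P \<subseteq> E \<and> (\<forall>v\<in>V. even (deg_in P src tgt v))"

definition T_div ::
  "'v set \<Rightarrow> 'e set \<Rightarrow> ('e \<Rightarrow> 'v) \<Rightarrow> ('e \<Rightarrow> 'v) \<Rightarrow> ('v \<Rightarrow> nat) \<Rightarrow> ('e \<Rightarrow> real)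
     \<Rightarrow> 'e set \<Rightarrow> ('v, 'e) tpoint \<Rightarrow> int" where
  "T_div V E src tgt w l P x =
     (case x of
        Vtx v \<Rightarrow> (if v \<in> V then int (deg_in P src tgt v div 2) - 1 + int (w v) else 0)
      | Pt e t \<Rightarrow> (if e \<in> E - P \<and> t = l e / 2 then 1 else 0))"

end

theory Submission
  imports Defs
begin


lemma out_slope_eq:
  assumes "eventually (\<lambda>h. g (t + h) = g t + of_int s * h) (at_right (0::real))"
  shows "out_slope g t = s"
proof -
  have uniq: "s' = s" if "eventually (\<lambda>h. g (t + h) = g t + of_int s' * h) (at_right (0::real))" for s'
  proof -
    have "eventually (\<lambda>h. h > 0 \<and> (g (t + h) = g t + of_int s' * h \<and> g (t + h) = g t + of_int s * h)) (at_right (0::real))"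
      by (rule eventually_conj[OF eventually_at_right_less[of 0] eventually_conj[OF that assms]])
    then obtain h :: real where "h > 0" "g (t + h) = g t + of_int s' * h" "g (t + h) = g t + of_int s * h"
      using eventually_happens'[OF trivial_limit_at_right_real] by blast
    then have "of_int s' * h = of_int s * h" by simp
    with \<open>h > 0\<close> show ?thesis by simp
  qed
  show ?thesis unfolding out_slope_def
    by (rule the_equality[where P="\<lambda>s. eventually (\<lambda>h. g (t + h) = g t + of_int s * h) (at_right (0::real))"])
      (rule assms, rule uniq)
qed

definition ramp :: "real \<Rightarrow> real" where "ramp x = max 0 x"

lemma ramp_right: "eventually (\<lambda>h. ramp (t + h - b) = ramp (t - b) + (if b \<le> t then 1 else 0) * h) (at_right 0)"
proof (cases "b \<le> t")
  case True
  show ?thesis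
    by (rule eventually_mono[OF eventually_at_right_less[of 0]]) (use True in \<open>simp add: ramp_def\<close>)
next
  case False then show ?thesis by (intro eventually_at_rightI[of 0 "b - t"]) (auto simp: ramp_def)
qed

lemma ramp_left: "eventually (\<lambda>h. ramp (t - h - b) = ramp (t - b) - (if b < t then 1 else 0) * h) (at_right 0)"
proof (cases "b < t")
  case True then show ?thesis by (intro eventually_at_rightI[of 0 "t - b"]) (auto simp: ramp_def)
next
  case False
  show ?thesis
    by (rule eventually_mono[OF eventually_at_right_less[of 0]]) (use False in \<open>simp add: ramp_def\<close>)
qed

lemma piece_right:
  assumes "a < b" "\<forall>t\<in>{a..b}. g t = g a + of_int s * (t - a)"
  shows "out_slope g a = s"
proof (rule out_slope_eq, rule eventually_at_rightI[of 0 "b - a"])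
  fix h assume h: "h \<in> {0<..<b - a}"
  then have "a + h \<in> {a..b}" by auto
  from assms(2)[rule_format, OF this] show "g (a + h) = g a + of_int s * h" by simp
qed (use assms in simp)

lemma piece_left:
  assumes "a < b" "\<forall>t\<in>{a..b}. g t = g a + of_int s * (t - a)"
  shows "out_slope (\<lambda>u. g (c - u)) (c - b) = - s"
proof (rule out_slope_eq, rule eventually_at_rightI[of 0 "b - a"])
  fix h assume h: "h \<in> {0<..<b - a}"
  have "b - h \<in> {a..b}" "b \<in> {a..b}" using h assms(1) by auto
  from assms(2)[rule_format, OF this(1)] assms(2)[rule_format, OF this(2)]
  have "g (b - h) = g a + of_int s * (b - h - a)" "g b = g a + of_int s * (b - a)" by auto
  then show "g (c - (c - b + h)) = g (c - (c - b)) + of_int (- s) * h"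
    by (simp add: algebra_simps)
qed (use assms in simp)



lemma cross:
  assumes "(a,b) \<in> R\<^sup>*" "a \<in> S" "b \<notin> S"
  shows "\<exists>p q. (p,q) \<in> R \<and> p \<in> S \<and> q \<notin> S"
  using assms by (induction rule: rtrancl_induct) auto

definition dinv where
  "dinv V E src tgt (c :: 'e \<Rightarrow> real) v0 S \<delta> \<longleftrightarrow>
  v0 \<in> S \<and> S \<subseteq> V \<and>
  (\<forall>e\<in>E. src e \<in> S \<longrightarrow> tgt e \<in> S \<longrightarrow> \<bar>\<delta> (src e) - \<delta> (tgt e)\<bar> \<le> c e) \<and>
  (\<forall>x\<in>S-{v0}. \<exists>e\<in>E. (src e = x \<and> tgt e \<in> S \<and> \<delta> x = \<delta> (tgt e) + c e) \<or> (tgt e = x \<and> src e \<in> S \<and> \<delta> x = \<delta> (src e) + c e)) \<and>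
  (\<forall>e\<in>E. \<forall>z\<in>S. (src e \<in> S \<and> tgt e \<notin> S \<longrightarrow> \<delta> z \<le> \<delta> (src e) + c e) \<and> (tgt e \<in> S \<and> src e \<notin> S \<longrightarrow> \<delta> z \<le> \<delta> (tgt e) + c e))"

lemma dijkstra_step:
  assumes fin: "finite V" "finite E" and ends: "\<forall>e\<in>E. src e \<in> V \<and> tgt e \<in> V"
    and conn: "graph_connected V E src tgt" and cnn: "\<forall>e\<in>E. c e \<ge> (0::real)"
    and inv: "dinv V E src tgt c v0 S \<delta>" and ne: "S \<noteq> V"
  shows "\<exists>x \<delta>'. x \<in> V - S \<and> dinv V E src tgt c v0 (insert x S) \<delta>'"
proof -
  from inv have v0S: "v0 \<in> S" and SV: "S \<subseteq> V"
    and I2: "\<forall>e\<in>E. src e \<in> S \<longrightarrow> tgt e \<in> S \<longrightarrow> \<bar>\<delta> (src e) - \<delta> (tgt e)\<bar> \<le> c e"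
    and I3: "\<forall>x\<in>S-{v0}. \<exists>e\<in>E. (src e = x \<and> tgt e \<in> S \<and> \<delta> x = \<delta> (tgt e) + c e) \<or> (tgt e = x \<and> src e \<in> S \<and> \<delta> x = \<delta> (src e) + c e)"
    and I4: "\<forall>e\<in>E. \<forall>z\<in>S. (src e \<in> S \<and> tgt e \<notin> S \<longrightarrow> \<delta> z \<le> \<delta> (src e) + c e) \<and> (tgt e \<in> S \<and> src e \<notin> S \<longrightarrow> \<delta> z \<le> \<delta> (tgt e) + c e)"
    unfolding dinv_def by blast+
  obtain x0 where x0: "x0 \<in> V" "x0 \<notin> S" using ne SV by blast
  from conn v0S SV x0 have "(v0, x0) \<in> ({(src e, tgt e) | e. e \<in> E} \<union> {(tgt e, src e) | e. e \<in> E})\<^sup>*"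
    unfolding graph_connected_def by blast
  from cross[OF this v0S x0(2)] obtain e1 where e1: "e1 \<in> E"
    "(src e1 \<in> S \<and> tgt e1 \<notin> S) \<or> (tgt e1 \<in> S \<and> src e1 \<notin> S)" by blast
  define C where "C = (\<lambda>e. \<delta> (src e) + c e) ` {e\<in>E. src e \<in> S \<and> tgt e \<notin> S}
       \<union> (\<lambda>e. \<delta> (tgt e) + c e) ` {e\<in>E. tgt e \<in> S \<and> src e \<notin> S}"
  have Cfin: "finite C" unfolding C_def using fin by auto
  have Cne: "C \<noteq> {}" unfolding C_def using e1 by blast
  define m where "m = Min C"
  have mC: "m \<in> C" unfolding m_def using Cfin Cne by (rule Min_in)
  have mle1: "m \<le> \<delta> (src e) + c e" if "e \<in> E" "src e \<in> S" "tgt e \<notin> S" for e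
    unfolding m_def using Cfin that by (intro Min_le) (auto simp: C_def)
  have mle2: "m \<le> \<delta> (tgt e) + c e" if "e \<in> E" "tgt e \<in> S" "src e \<notin> S" for e
    unfolding m_def using Cfin that by (intro Min_le) (auto simp: C_def)
  from mC obtain e0 where e0E: "e0 \<in> E" and alt: "(src e0 \<in> S \<and> tgt e0 \<notin> S \<and> m = \<delta> (src e0) + c e0) \<or> (tgt e0 \<in> S \<and> src e0 \<notin> S \<and> m = \<delta> (tgt e0) + c e0)"
    unfolding C_def by auto
  obtain u x where e0: "e0 \<in> E" "u \<in> S" "x \<notin> S"
    "(src e0 = u \<and> tgt e0 = x) \<or> (tgt e0 = u \<and> src e0 = x)" "m = \<delta> u + c e0"
    using e0E alt by blast
  have xV: "x \<in> V" using e0 ends by auto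
  have dle: "\<delta> z \<le> m" if "z \<in> S" for z
  proof -
    have A: "(src e0 \<in> S \<and> tgt e0 \<notin> S \<longrightarrow> \<delta> z \<le> \<delta> (src e0) + c e0) \<and> (tgt e0 \<in> S \<and> src e0 \<notin> S \<longrightarrow> \<delta> z \<le> \<delta> (tgt e0) + c e0)"
      using I4 e0(1) that by blast
    from e0(4) show ?thesis
    proof
      assume "src e0 = u \<and> tgt e0 = x" then show ?thesis using A e0 by auto
    next
      assume "tgt e0 = u \<and> src e0 = x" then show ?thesis using A e0 by auto
    qed
  qed
  define \<delta>' where "\<delta>' = \<delta>(x := m)"
  have d'S: "\<delta>' z = \<delta> z" if "z \<in> S" for z using that e0(3) unfolding \<delta>'_def by auto
  have d'x: "\<delta>' x = m" unfolding \<delta>'_def by simp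
  have J2: "\<forall>e\<in>E. src e \<in> insert x S \<longrightarrow> tgt e \<in> insert x S \<longrightarrow> \<bar>\<delta>' (src e) - \<delta>' (tgt e)\<bar> \<le> c e"
  proof (intro ballI impI)
    fix e assume e: "e \<in> E" "src e \<in> insert x S" "tgt e \<in> insert x S"
    show "\<bar>\<delta>' (src e) - \<delta>' (tgt e)\<bar> \<le> c e"
    proof (cases "src e = x")
      case True
      show ?thesis
      proof (cases "tgt e = x")
        case True with \<open>src e = x\<close> show ?thesis using cnn e by simp
      next
        case False
        then have "tgt e \<in> S" using e by auto
        then show ?thesis using True mle2[of e] dle[of "tgt e"] e0(3) e d'S d'x by auto
      qed
    next
      case False
      then have sS: "src e \<in> S" using e by auto
      show ?thesis
      proof (cases "tgt e = x")
        case True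
        then show ?thesis using sS mle1[of e] dle[of "src e"] e0(3) e d'S d'x by auto
      next
        case False
        then have "tgt e \<in> S" using e by auto
        then show ?thesis using sS I2 e d'S by auto
      qed
    qed
  qed
  have J3: "\<forall>y\<in>insert x S-{v0}. \<exists>e\<in>E. (src e = y \<and> tgt e \<in> insert x S \<and> \<delta>' y = \<delta>' (tgt e) + c e) \<or> (tgt e = y \<and> src e \<in> insert x S \<and> \<delta>' y = \<delta>' (src e) + c e)"
  proof
    fix y assume y: "y \<in> insert x S - {v0}"
    show "\<exists>e\<in>E. (src e = y \<and> tgt e \<in> insert x S \<and> \<delta>' y = \<delta>' (tgt e) + c e) \<or> (tgt e = y \<and> src e \<in> insert x S \<and> \<delta>' y = \<delta>' (src e) + c e)"
    proof (cases "y = x")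
      case True
      then show ?thesis using e0 d'x d'S by (intro bexI[of _ e0]) auto
    next
      case False
      then have "y \<in> S - {v0}" using y by auto
      then obtain e where "e \<in> E" "(src e = y \<and> tgt e \<in> S \<and> \<delta> y = \<delta> (tgt e) + c e) \<or> (tgt e = y \<and> src e \<in> S \<and> \<delta> y = \<delta> (src e) + c e)"
        using I3 by blast
      then show ?thesis using d'S \<open>y \<in> S - {v0}\<close> by (intro bexI[of _ e]) auto
    qed
  qed
  have d'le: "\<delta>' z \<le> m" if "z \<in> insert x S" for z
    using that dle d'S d'x by (cases "z = x") auto
  have J4: "\<forall>e\<in>E. \<forall>z\<in>insert x S. (src e \<in> insert x S \<and> tgt e \<notin> insert x S \<longrightarrow> \<delta>' z \<le> \<delta>' (src e) + c e) \<and> (tgt e \<in> insert x S \<and> src e \<notin> insert x S \<longrightarrow> \<delta>' z \<le> \<delta>' (tgt e) + c e)"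
  proof (intro ballI conjI impI)
    fix e z assume e: "e \<in> E" and z: "z \<in> insert x S"
    { assume a: "src e \<in> insert x S \<and> tgt e \<notin> insert x S"
      show "\<delta>' z \<le> \<delta>' (src e) + c e"
      proof (cases "src e = x")
        case True then show ?thesis using d'le[OF z] d'x cnn e by auto
      next
        case False then show ?thesis using a d'le[OF z] mle1[of e] e d'S by auto
      qed }
    { assume a: "tgt e \<in> insert x S \<and> src e \<notin> insert x S"
      show "\<delta>' z \<le> \<delta>' (tgt e) + c e"
      proof (cases "tgt e = x")
        case True then show ?thesis using d'le[OF z] d'x cnn e by auto
      next
        case False then show ?thesis using a d'le[OF z] mle2[of e] e d'S by auto
      qed }
  qed
  have "dinv V E src tgt c v0 (insert x S) \<delta>'"
    unfolding dinv_def using v0S SV xV J2 J3 J4 by blast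
  then show ?thesis using xV e0(3) by blast
qed

lemma dijkstra_main:
  assumes fin: "finite V" "finite E" and ends: "\<forall>e\<in>E. src e \<in> V \<and> tgt e \<in> V"
    and conn: "graph_connected V E src tgt" and cnn: "\<forall>e\<in>E. c e \<ge> (0::real)"
  shows "card (V - S) = n \<Longrightarrow> dinv V E src tgt c v0 S \<delta> \<Longrightarrow> \<exists>\<delta>. (\<forall>e\<in>E. \<bar>\<delta> (src e) - \<delta> (tgt e)\<bar> \<le> c e) \<and>
     (\<forall>x\<in>V-{v0}. \<exists>e\<in>E. (src e = x \<and> \<delta> x = \<delta> (tgt e) + c e) \<or> (tgt e = x \<and> \<delta> x = \<delta> (src e) + c e))"
proof (induction n arbitrary: S \<delta>)
  case 0
  then have "S \<subseteq> V" "V - S = {}" using fin unfolding dinv_def by auto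
  then have "S = V" by blast
  from 0(2) have I2: "\<forall>e\<in>E. src e \<in> S \<longrightarrow> tgt e \<in> S \<longrightarrow> \<bar>\<delta> (src e) - \<delta> (tgt e)\<bar> \<le> c e"
    and I3: "\<forall>x\<in>S-{v0}. \<exists>e\<in>E. (src e = x \<and> tgt e \<in> S \<and> \<delta> x = \<delta> (tgt e) + c e) \<or> (tgt e = x \<and> src e \<in> S \<and> \<delta> x = \<delta> (src e) + c e)"
    unfolding dinv_def by blast+
  have A: "\<forall>e\<in>E. \<bar>\<delta> (src e) - \<delta> (tgt e)\<bar> \<le> c e" using I2 ends \<open>S = V\<close> by blast
  have B: "\<forall>x\<in>V-{v0}. \<exists>e\<in>E. (src e = x \<and> \<delta> x = \<delta> (tgt e) + c e) \<or> (tgt e = x \<and> \<delta> x = \<delta> (src e) + c e)"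
  proof
    fix x assume "x \<in> V - {v0}"
    then obtain e where "e \<in> E" "(src e = x \<and> tgt e \<in> S \<and> \<delta> x = \<delta> (tgt e) + c e) \<or> (tgt e = x \<and> src e \<in> S \<and> \<delta> x = \<delta> (src e) + c e)"
      using I3 \<open>S = V\<close> by blast
    then show "\<exists>e\<in>E. (src e = x \<and> \<delta> x = \<delta> (tgt e) + c e) \<or> (tgt e = x \<and> \<delta> x = \<delta> (src e) + c e)" by blast
  qed
  show ?case using A B by blast
next
  case (Suc n)
  then have "S \<noteq> V" by auto
  from dijkstra_step[OF fin ends conn cnn Suc.prems(2) this] obtain x \<delta>' where
    x: "x \<in> V - S" "dinv V E src tgt c v0 (insert x S) \<delta>'" by blast
  have "V - insert x S = (V - S) - {x}" by blast
  then have "card (V - insert x S) = n" using Suc.prems(1) x(1) fin by (simp add: card_Diff_singleton)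
  from Suc.IH[OF this x(2)] show ?case .
qed

lemma dijkstra:
  assumes fin: "finite V" "finite E" and ends: "\<forall>e\<in>E. src e \<in> V \<and> tgt e \<in> V"
    and conn: "graph_connected V E src tgt" and v0: "v0 \<in> V" and cnn: "\<forall>e\<in>E. c e \<ge> (0::real)"
  shows "\<exists>\<delta>. (\<forall>e\<in>E. \<bar>\<delta> (src e) - \<delta> (tgt e)\<bar> \<le> c e) \<and>
     (\<forall>x\<in>V-{v0}. \<exists>e\<in>E. (src e = x \<and> \<delta> x = \<delta> (tgt e) + c e) \<or> (tgt e = x \<and> \<delta> x = \<delta> (src e) + c e))"
proof -
  have "dinv V E src tgt c v0 {v0} (\<lambda>_. 0)" unfolding dinv_def using v0 cnn by auto
  from dijkstra_main[OF fin ends conn cnn refl this] show ?thesis .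
qed



lemma sgn1: "(d::real) > 0 \<Longrightarrow> of_int s * d \<le> 0 \<Longrightarrow> s \<le> 0" by (simp add: mult_le_0_iff)
lemma sgn2: "(d::real) > 0 \<Longrightarrow> of_int s * d \<ge> 0 \<Longrightarrow> s \<ge> 0" by (simp add: zero_le_mult_iff)
lemma sgn3: "(d::real) > 0 \<Longrightarrow> of_int s * d < 0 \<Longrightarrow> s \<le> -1" by (simp add: mult_less_0_iff)
lemma sgn4: "(d::real) > 0 \<Longrightarrow> of_int s * d > 0 \<Longrightarrow> s \<ge> 1" by (simp add: zero_less_mult_iff)

lemma strict_mono_part:
  assumes "\<forall>i<k. a i < a (Suc i)" "i < j" "j \<le> k"
  shows "a i < (a j :: real)"
  using assms(2,3)
proof (induction j)
  case 0 then show ?case by simp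
next
  case (Suc j)
  show ?case
  proof (cases "i = j")
    case True then show ?thesis using assms(1) Suc.prems by auto
  next
    case False
    then have "a i < a j" using Suc by auto
    also have "a j < a (Suc j)" using assms(1) Suc.prems by auto
    finally show ?thesis .
  qed
qed

lemma choose3:
  assumes "\<forall>e\<in>E. \<exists>a k s. Q e a k s"
  shows "\<exists>A K S. \<forall>e\<in>E. Q e (A e) (K e) (S e)"
  using assms by metis



lemma no_effective:
  assumes tc: "tropical_curve V E src tgt w l" and pure: "\<forall>v\<in>V. w v = 0"
    and rf: "rational_fun E src tgt l f"
  shows "\<exists>x\<in>tpoints V E l. T_div V E src tgt w l {} x + div_fun E src tgt l f x < 0"
proof -
  from tc have finV: "finite V" and finE: "finite E"
    and ends: "\<forall>e\<in>E. src e \<in> V \<and> tgt e \<in> V" and lpos: "\<forall>e\<in>E. l e > 0"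
    unfolding tropical_curve_def by auto
  let ?g = "edge_fun src tgt l f"
  obtain A K S where H: "\<forall>e\<in>E. A e 0 = 0 \<and> A e (K e) = l e \<and> (\<forall>i<K e. A e i < A e (Suc i)) \<and>
        (\<forall>i<K e. \<forall>t\<in>{A e i..A e (Suc i)}. ?g e t = ?g e (A e i) + of_int (S e i) * (t - A e i))"
    using choose3[OF rf[unfolded rational_fun_def]] by blast
  have A0: "A e 0 = 0" and AK: "A e (K e) = l e" and Amono: "\<forall>i<K e. A e i < A e (Suc i)"
    and Apiece: "\<And>i. i < K e \<Longrightarrow> \<forall>t\<in>{A e i..A e (Suc i)}. ?g e t = ?g e (A e i) + of_int (S e i) * (t - A e i)"
    if "e \<in> E" for e using H that by blast+
  have Kpos: "0 < K e" if "e \<in> E" for e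
  proof (rule ccontr)
    assume "\<not> 0 < K e"
    then have "K e = 0" by simp
    then show False using A0[OF that] AK[OF that] lpos that by auto
  qed
  have Alt: "A e i < A e j" if "e \<in> E" "i < j" "j \<le> K e" for e i j
    using strict_mono_part[OF Amono[OF that(1)] that(2,3)] .
  have g0: "?g e 0 = f (Vtx (src e))" for e by (simp add: edge_fun_def)
  have gL: "?g e (l e) = f (Vtx (tgt e))" if "e \<in> E" for e
    using lpos[rule_format, OF that] by (simp add: edge_fun_def)
  have step: "?g e (A e (Suc i)) = ?g e (A e i) + of_int (S e i) * (A e (Suc i) - A e i)"
    if "e \<in> E" "i < K e" for e i
  proof -
    have "A e (Suc i) \<in> {A e i..A e (Suc i)}" using Amono[OF that(1)] that(2) by auto
    from Apiece[OF that, rule_format, OF this] show ?thesis .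
  qed
  have rslope: "out_slope (?g e) (A e i) = S e i" if "e \<in> E" "i < K e" for e i
    using piece_right[OF _ Apiece[OF that]] Amono[OF that(1)] that(2) by auto
  have lslope: "out_slope (\<lambda>u. ?g e (- u)) (- A e (Suc i)) = - S e i" if "e \<in> E" "i < K e" for e i
    using piece_left[OF _ Apiece[OF that], of 0] Amono[OF that(1)] that(2) by auto
  have vlslope: "out_slope (\<lambda>t. ?g e (l e - t)) 0 = - S e (K e - 1)" if "e \<in> E" for e
  proof -
    have k: "K e - 1 < K e" "Suc (K e - 1) = K e" using Kpos[OF that] by auto
    have "A e (K e - 1) < A e (Suc (K e - 1))" using Amono[OF that] k(1) by blast
    then have lt: "A e (K e - 1) < l e" using k(2) AK[OF that] by simp
    from piece_left[OF _ Apiece[OF that k(1)], of "l e"] lt k(2) AK[OF that] show ?thesis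
      by simp
  qed
  define Vals where "Vals = (\<lambda>v. f (Vtx v)) ` V \<union> (\<Union>e\<in>E. (\<lambda>i. ?g e (A e i)) ` {..K e})"
  have finVals: "finite Vals" unfolding Vals_def using finV finE by auto
  have Vals_ne: "Vals \<noteq> {}" using tc unfolding Vals_def tropical_curve_def by auto
  define M where "M = Max Vals"
  have vleM: "f (Vtx v) \<le> M" if "v \<in> V" for v
    unfolding M_def using finVals that by (intro Max_ge) (auto simp: Vals_def)
  have bleM: "?g e (A e i) \<le> M" if "e \<in> E" "i \<le> K e" for e i
    unfolding M_def using finVals that by (intro Max_ge) (auto simp: Vals_def)
  have MVals: "M \<in> Vals" unfolding M_def using finVals Vals_ne by (rule Max_in)
  have Tv: "T_div V E src tgt w l {} (Vtx v) = -1" if "v \<in> V" for v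
    using that pure by (simp add: T_div_def deg_in_def)
  have Tp: "T_div V E src tgt w l {} (Pt e t) = (if e \<in> E \<and> t = l e / 2 then 1 else 0)" for e t
    by (simp add: T_div_def)
  show ?thesis
  proof (cases "\<exists>v\<in>V. f (Vtx v) = M")
    case True
    then obtain v where v: "v \<in> V" "f (Vtx v) = M" by blast
    have s1: "out_slope (?g e) 0 \<le> 0" if "e \<in> {e\<in>E. src e = v}" for e
    proof -
      from that have e: "e \<in> E" "src e = v" by auto
      have "out_slope (?g e) 0 = S e 0" using rslope[OF e(1) Kpos[OF e(1)]] A0[OF e(1)] by simp
      moreover have "?g e (A e 1) = M + of_int (S e 0) * A e 1"
        using step[OF e(1) Kpos[OF e(1)]] A0[OF e(1)] g0[of e] e v by simp
      moreover have "?g e (A e 1) \<le> M" using bleM[OF e(1)] Kpos[OF e(1)] by simp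
      moreover have "A e 1 > 0" using Alt[OF e(1), of 0 1] Kpos[OF e(1)] A0[OF e(1)] by simp
      ultimately show ?thesis using sgn1[of "A e 1" "S e 0"] by simp
    qed
    have s2: "out_slope (\<lambda>t. ?g e (l e - t)) 0 \<le> 0" if "e \<in> {e\<in>E. tgt e = v}" for e
    proof -
      from that have e: "e \<in> E" "tgt e = v" by auto
      have k: "K e - 1 < K e" "Suc (K e - 1) = K e" using Kpos[OF e(1)] by auto
      have "?g e (A e (K e)) = ?g e (A e (K e - 1)) + of_int (S e (K e - 1)) * (A e (K e) - A e (K e - 1))"
        using step[OF e(1) k(1)] k(2) by simp
      moreover have "?g e (A e (K e)) = M" using AK[OF e(1)] gL[OF e(1)] e v by simp
      moreover have "?g e (A e (K e - 1)) \<le> M" using bleM[OF e(1)] by simp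
      moreover have "A e (K e) - A e (K e - 1) > 0" using Amono[OF e(1)] k by (metis diff_gt_0_iff_gt)
      ultimately have "S e (K e - 1) \<ge> 0" using sgn2[of "A e (K e) - A e (K e - 1)" "S e (K e - 1)"] by simp
      then show ?thesis using vlslope[OF e(1)] by simp
    qed
    have "div_fun E src tgt l f (Vtx v) \<le> 0"
    proof -
      have "(\<Sum>e\<in>{e\<in>E. src e = v}. out_slope (?g e) 0) \<le> 0" using s1 by (rule sum_nonpos)
      moreover have "(\<Sum>e\<in>{e\<in>E. tgt e = v}. out_slope (\<lambda>t. ?g e (l e - t)) 0) \<le> 0" using s2 by (rule sum_nonpos)
      ultimately show ?thesis unfolding div_fun_def by simp
    qed
    then have "T_div V E src tgt w l {} (Vtx v) + div_fun E src tgt l f (Vtx v) < 0"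
      using Tv[OF v(1)] by simp
    moreover have "Vtx v \<in> tpoints V E l" using v(1) by (simp add: tpoints_def)
    ultimately show ?thesis by blast
  next
    case False
    from MVals False obtain e i where ei: "e \<in> E" "i \<le> K e" "?g e (A e i) = M"
      unfolding Vals_def by auto
    define J where "J = {i. i \<le> K e \<and> ?g e (A e i) = M}"
    have finJ: "finite J" unfolding J_def by auto
    have iJ: "i \<in> J" unfolding J_def using ei by auto
    have inner: "0 < j \<and> j < K e" if "j \<in> J" for j
    proof -
      from that have j: "j \<le> K e" "?g e (A e j) = M" unfolding J_def by auto
      have sV: "src e \<in> V" "tgt e \<in> V" using ends ei(1) by auto
      have "j \<noteq> 0"
      proof
        assume "j = 0"
        then have "f (Vtx (src e)) = M" using j A0[OF ei(1)] g0[of e] by simp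
        then show False using False sV by blast
      qed
      moreover have "j \<noteq> K e"
      proof
        assume "j = K e"
        then have "f (Vtx (tgt e)) = M" using j AK[OF ei(1)] gL[OF ei(1)] by simp
        then show False using False sV by blast
      qed
      ultimately show ?thesis using j by auto
    qed
    have gen: "div_fun E src tgt l f (Pt e (A e j)) = S e j - S e (j - 1) \<and> S e j \<le> 0 \<and> S e (j - 1) \<ge> 0
        \<and> Pt e (A e j) \<in> tpoints V E l"
      if "j \<in> J" for j
    proof -
      from inner[OF that] have j: "0 < j" "j < K e" by auto
      have jM: "?g e (A e j) = M" using that unfolding J_def by auto
      have k: "j - 1 < K e" "Suc (j - 1) = j" using j by auto
      have d1: "div_fun E src tgt l f (Pt e (A e j)) = S e j - S e (j - 1)"
        using rslope[OF ei(1) j(2)] lslope[OF ei(1) k(1)] k(2) by (simp add: div_fun_def)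
      have "?g e (A e (Suc j)) = M + of_int (S e j) * (A e (Suc j) - A e j)"
        using step[OF ei(1) j(2)] jM by simp
      moreover have "?g e (A e (Suc j)) \<le> M" using bleM[OF ei(1)] j by simp
      moreover have "A e (Suc j) - A e j > 0" using Amono[OF ei(1)] j by simp
      ultimately have d2: "S e j \<le> 0" using sgn1[of "A e (Suc j) - A e j" "S e j"] by simp
      have "M = ?g e (A e (j - 1)) + of_int (S e (j - 1)) * (A e j - A e (j - 1))"
        using step[OF ei(1) k(1)] k(2) jM by simp
      moreover have "?g e (A e (j - 1)) \<le> M" using bleM[OF ei(1)] j by simp
      moreover have "A e j - A e (j - 1) > 0" using Amono[OF ei(1)] k by (metis diff_gt_0_iff_gt)
      ultimately have d3: "S e (j - 1) \<ge> 0" using sgn2[of "A e j - A e (j - 1)" "S e (j - 1)"] by simp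
      have "A e 0 < A e j" "A e j < A e (K e)" using Alt[OF ei(1)] j by auto
      then have "Pt e (A e j) \<in> tpoints V E l" using A0[OF ei(1)] AK[OF ei(1)] ei(1)
        by (auto simp: tpoints_def)
      with d1 d2 d3 show ?thesis by blast
    qed
    define j0 where "j0 = Min J"
    define j1 where "j1 = Max J"
    have j0J: "j0 \<in> J" unfolding j0_def using finJ iJ by (intro Min_in) auto
    have j1J: "j1 \<in> J" unfolding j1_def using finJ iJ by (intro Max_in) auto
    have j0pos: "S e (j0 - 1) \<ge> 1"
    proof -
      from inner[OF j0J] have j: "0 < j0" "j0 < K e" by auto
      have k: "j0 - 1 < K e" "Suc (j0 - 1) = j0" using j by auto
      have "j0 - 1 \<notin> J"
      proof
        assume "j0 - 1 \<in> J"
        then have "j0 \<le> j0 - 1" unfolding j0_def using finJ by (intro Min_le) auto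
        with j show False by simp
      qed
      then have "?g e (A e (j0 - 1)) \<noteq> M" unfolding J_def using j by auto
      moreover have "?g e (A e (j0 - 1)) \<le> M" using bleM[OF ei(1)] j by simp
      moreover have "M = ?g e (A e (j0 - 1)) + of_int (S e (j0 - 1)) * (A e j0 - A e (j0 - 1))"
        using step[OF ei(1) k(1)] k(2) j0J unfolding J_def by simp
      moreover have "A e j0 - A e (j0 - 1) > 0" using Amono[OF ei(1)] k by (metis diff_gt_0_iff_gt)
      ultimately have "of_int (S e (j0 - 1)) * (A e j0 - A e (j0 - 1)) > 0"
        "A e j0 - A e (j0 - 1) > 0" by linarith+
      then show ?thesis using sgn4 by blast
    qed
    have j1neg: "S e j1 \<le> -1"
    proof -
      from inner[OF j1J] have j: "0 < j1" "j1 < K e" by auto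
      have "Suc j1 \<notin> J"
      proof
        assume "Suc j1 \<in> J"
        then have "Suc j1 \<le> j1" unfolding j1_def using finJ by (intro Max_ge) auto
        then show False by simp
      qed
      then have "?g e (A e (Suc j1)) \<noteq> M" unfolding J_def using j by auto
      moreover have "?g e (A e (Suc j1)) \<le> M" using bleM[OF ei(1)] j by simp
      moreover have "?g e (A e (Suc j1)) = M + of_int (S e j1) * (A e (Suc j1) - A e j1)"
        using step[OF ei(1) j(2)] j1J unfolding J_def by simp
      moreover have "A e (Suc j1) - A e j1 > 0" using Amono[OF ei(1)] j by simp
      ultimately have "of_int (S e j1) * (A e (Suc j1) - A e j1) < 0"
        "A e (Suc j1) - A e j1 > 0" by linarith+
      then show ?thesis using sgn3 by blast
    qed
    show ?thesis
    proof (cases "A e j0 = l e / 2")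
      case F0: False
      have "T_div V E src tgt w l {} (Pt e (A e j0)) + div_fun E src tgt l f (Pt e (A e j0)) < 0"
        using gen[OF j0J] j0pos Tp[of e "A e j0"] F0 by simp
      then show ?thesis using gen[OF j0J] by blast
    next
      case T0: True
      show ?thesis
      proof (cases "A e j1 = l e / 2")
        case F1: False
        have "T_div V E src tgt w l {} (Pt e (A e j1)) + div_fun E src tgt l f (Pt e (A e j1)) < 0"
          using gen[OF j1J] j1neg Tp[of e "A e j1"] F1 by simp
        then show ?thesis using gen[OF j1J] by blast
      next
        case T1: True
        have "j0 = j1"
        proof (rule ccontr)
          assume "j0 \<noteq> j1"
          moreover have "j0 \<le> j1" unfolding j0_def j1_def using finJ iJ by (meson Max_ge Min_le order_trans)
          ultimately have "j0 < j1" by simp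
          then have "A e j0 < A e j1" using Alt[OF ei(1)] inner[OF j1J] by auto
          with T0 T1 show False by simp
        qed
        have "T_div V E src tgt w l {} (Pt e (A e j0)) + div_fun E src tgt l f (Pt e (A e j0)) < 0"
          using gen[OF j0J] j0pos j1neg \<open>j0 = j1\<close> Tp[of e "A e j0"] T0 ei(1) by simp
        then show ?thesis using gen[OF j0J] by blast
      qed
    qed
  qed
qed



lemma partition_exists:
  fixes B :: "real set"
  assumes fin: "finite B" and sub: "B \<subseteq> {0..L}" and B0: "0 \<in> B" and BL: "L \<in> B"
  shows "\<exists>a k. a 0 = 0 \<and> a k = L \<and> (\<forall>i<k. a i < a (Suc i)) \<and>
     (\<forall>i<k. \<forall>b\<in>B. b \<le> a i \<or> a (Suc i) \<le> b) \<and> (\<forall>i\<le>k. a i \<in> B)"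
proof -
  define xs where "xs = sorted_list_of_set B"
  have set_xs: "set xs = B" using fin by (simp add: xs_def)
  have sw: "sorted_wrt (<) xs" by (simp add: xs_def)
  have lt: "xs ! i < xs ! j" if "i < j" "j < length xs" for i j
    using sorted_wrt_nth_less[OF sw that] .
  have le: "xs ! i \<le> xs ! j" if "i \<le> j" "j < length xs" for i j
    using lt[of i j] that by (cases "i = j") auto
  obtain j0 where j0: "j0 < length xs" "xs ! j0 = 0" using B0 set_xs by (metis in_set_conv_nth)
  obtain jL where jL: "jL < length xs" "xs ! jL = L" using BL set_xs by (metis in_set_conv_nth)
  have inB: "xs ! i \<in> B" if "i < length xs" for i using that set_xs nth_mem by blast
  have "j0 = 0"
  proof (rule ccontr)
    assume "j0 \<noteq> 0"
    then have "xs ! 0 < xs ! j0" using lt[of 0 j0] j0 by auto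
    moreover have "xs ! 0 \<in> B" using inB[of 0] j0(1) by (cases xs) auto
    ultimately show False using sub j0 by auto
  qed
  define k where "k = length xs - 1"
  have "jL = k"
  proof (rule ccontr)
    assume "jL \<noteq> k"
    then have "jL < k" using jL unfolding k_def by auto
    then have "xs ! jL < xs ! k" using lt[of jL k] jL unfolding k_def by auto
    moreover have "xs ! k \<in> B" using inB[of k] jL(1) unfolding k_def by simp
    ultimately show False using sub jL by auto
  qed
  have klen: "k < length xs" using jL \<open>jL = k\<close> by simp
  show ?thesis
  proof (intro exI[of _ "\<lambda>i. xs ! i"] exI[of _ k] conjI allI impI ballI)
    show "xs ! 0 = 0" using j0 \<open>j0 = 0\<close> by simp
    show "xs ! k = L" using jL \<open>jL = k\<close> by simp
    fix i assume i: "i < k"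
    then show "xs ! i < xs ! Suc i" using lt klen by auto
    fix b assume "b \<in> B"
    then obtain j where j: "j < length xs" "xs ! j = b" using set_xs by (metis in_set_conv_nth)
    show "b \<le> xs ! i \<or> xs ! Suc i \<le> b"
    proof (cases "j \<le> i")
      case True then show ?thesis using le[of j i] i klen j by auto
    next
      case False then show ?thesis using le[of "Suc i" j] j by auto
    qed
  next
    fix i assume "i \<le> k" then show "xs ! i \<in> B" using inB klen by auto
  qed
qed

lemma ramp_diff:
  "a \<le> t \<Longrightarrow> b \<le> a \<or> t \<le> b \<Longrightarrow> ramp (t - b) - ramp (a - b) = (if b \<le> a then t - a else 0)"
  by (auto simp: ramp_def)



lemma has_effective:
  assumes tc: "tropical_curve V E src tgt w l" and es: "even_subgraph V E src tgt P"
    and v0: "v0 \<in> V" and v0ok: "deg_in P src tgt v0 div 2 \<ge> 1 \<or> w v0 \<ge> 1"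
  shows "\<not> rank_neg1 V E src tgt l (T_div V E src tgt w l P)"
proof -
  from tc have finV: "finite V" and finE: "finite E"
    and ends: "\<forall>e\<in>E. src e \<in> V \<and> tgt e \<in> V" and lpos: "\<forall>e\<in>E. l e > 0"
    and conn: "graph_connected V E src tgt"
    unfolding tropical_curve_def by auto
  from es have PE: "P \<subseteq> E" and ev: "\<forall>v\<in>V. even (deg_in P src tgt v)"
    unfolding even_subgraph_def by auto
  define c where "c e = (if e \<in> P then 0 else l e / 2)" for e
  have cnn: "\<forall>e\<in>E. c e \<ge> 0" using lpos by (auto simp: c_def)
  obtain \<delta> where Lip: "\<forall>e\<in>E. \<bar>\<delta> (src e) - \<delta> (tgt e)\<bar> \<le> c e"
    and tight: "\<forall>x\<in>V-{v0}. \<exists>e\<in>E. (src e = x \<and> \<delta> x = \<delta> (tgt e) + c e) \<or> (tgt e = x \<and> \<delta> x = \<delta> (src e) + c e)"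
    using dijkstra[OF finV finE ends conn v0 cnn] by blast
  define b1 where "b1 e = l e / 2 - \<delta> (src e) + \<delta> (tgt e)" for e
  have b1_rng: "0 \<le> b1 e \<and> b1 e \<le> l e" if "e \<in> E" for e
  proof -
    have a: "\<bar>\<delta> (src e) - \<delta> (tgt e)\<bar> \<le> c e" using Lip that by blast
    have "c e \<le> l e / 2" using lpos that by (auto simp: c_def)
    with a have "\<bar>\<delta> (src e) - \<delta> (tgt e)\<bar> \<le> l e / 2" by linarith
    then show ?thesis unfolding b1_def by arith
  qed
  have b1P: "b1 e = l e / 2" if "e \<in> P" for e
  proof -
    have "\<bar>\<delta> (src e) - \<delta> (tgt e)\<bar> \<le> c e" using Lip that PE by blast
    then have "\<bar>\<delta> (src e) - \<delta> (tgt e)\<bar> \<le> 0" using that by (simp add: c_def)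
    then show ?thesis unfolding b1_def by simp
  qed
  define f where "f x = (case x of Vtx v \<Rightarrow> - \<delta> v | Pt e t \<Rightarrow> - \<delta> (src e) + ramp (t - b1 e) - ramp (t - l e / 2))" for x
  define G where "G e t = - \<delta> (src e) + ramp (t - b1 e) - ramp (t - l e / 2)" for e t
  let ?g = "edge_fun src tgt l f"
  have EF: "?g e t = G e t" if te: "e \<in> E" "0 \<le> t" "t \<le> l e" for e t
  proof -
    have L: "l e > 0" using lpos te(1) by auto
    have r: "0 \<le> b1 e" "b1 e \<le> l e" using b1_rng[OF te(1)] by auto
    consider "t = 0" | "t = l e" | "0 < t" "t < l e" using te by linarith
    then show ?thesis
    proof cases
      case 1 then show ?thesis using L r by (simp add: edge_fun_def f_def G_def ramp_def)
    next
      case 2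
      have "max 0 (l e - b1 e) = l e - b1 e" "max 0 (l e / 2) = l e / 2" using r L by auto
      then show ?thesis using 2 L by (simp add: edge_fun_def f_def G_def ramp_def b1_def)
    next
      case 3 then show ?thesis by (simp add: edge_fun_def f_def G_def)
    qed
  qed
  have SR: "eventually (\<lambda>h. ?g e (t + h) = ?g e t + of_int ((if b1 e \<le> t then 1 else 0) - (if l e / 2 \<le> t then 1 else 0)) * h) (at_right 0)"
    if "e \<in> E" "0 \<le> t" "t < l e" for e t
  proof -
    have ev: "eventually (\<lambda>h. h \<in> {0<..<l e - t}) (at_right 0)"
      using eventually_at_right_real[of 0 "l e - t"] that by simp
    show ?thesis using ramp_right[of t "b1 e"] ramp_right[of t "l e / 2"] ev
    proof eventually_elim
      case (elim h)
      have 1: "?g e (t + h) = G e (t + h)" using elim(3) that by (intro EF) auto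
      have 2: "?g e t = G e t" using that by (intro EF) auto
      show ?case unfolding 1 2 G_def using elim(1,2)
        by (cases "b1 e \<le> t"; cases "l e / 2 \<le> t") (simp_all add: algebra_simps)
    qed
  qed
  have SL: "eventually (\<lambda>h. ?g e (t - h) = ?g e t - of_int ((if b1 e < t then 1 else 0) - (if l e / 2 < t then 1 else 0)) * h) (at_right 0)"
    if "e \<in> E" "0 < t" "t \<le> l e" for e t
  proof -
    have ev: "eventually (\<lambda>h. h \<in> {0<..<t}) (at_right 0)"
      using eventually_at_right_real[of 0 t] that by simp
    show ?thesis using ramp_left[of t "b1 e"] ramp_left[of t "l e / 2"] ev
    proof eventually_elim
      case (elim h)
      have 1: "?g e (t - h) = G e (t - h)" using elim(3) that by (intro EF) auto
      have 2: "?g e t = G e t" using that by (intro EF) auto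
      show ?case unfolding 1 2 G_def using elim(1,2)
        by (cases "b1 e < t"; cases "l e / 2 < t") (simp_all add: algebra_simps)
    qed
  qed
  have divP: "div_fun E src tgt l f (Pt e t) = (if t = b1 e then 1 else 0) - (if t = l e / 2 then 1 else 0)"
    if "e \<in> E" "0 < t" "t < l e" for e t
  proof -
    have r: "out_slope (?g e) t = (if b1 e \<le> t then 1 else 0) - (if l e / 2 \<le> t then 1 else 0)"
      by (rule out_slope_eq) (rule SR, use that in auto)
    have lft: "out_slope (\<lambda>u. ?g e (- u)) (- t) = - ((if b1 e < t then 1 else 0) - (if l e / 2 < t then 1 else 0))"
    proof (rule out_slope_eq)
      show "\<forall>\<^sub>F h in at_right 0. ?g e (- (- t + h)) = ?g e (- (- t)) + real_of_int (- ((if b1 e < t then 1 else 0) - (if l e / 2 < t then 1 else 0))) * h"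
        using SL[OF that(1,2) less_imp_le[OF that(3)]] by (rule eventually_mono) (simp add: algebra_simps)
    qed
    show ?thesis unfolding div_fun_def using r lft by auto
  qed
  have vs: "out_slope (?g e) 0 = (if b1 e \<le> 0 then 1 else 0)" if "e \<in> E" for e
  proof -
    have "out_slope (?g e) 0 = (if b1 e \<le> 0 then 1 else 0) - (if l e / 2 \<le> 0 then 1 else 0)"
      by (rule out_slope_eq) (use SR[OF that, of 0] lpos that in auto)
    then show ?thesis using lpos that by auto
  qed
  have vt: "out_slope (\<lambda>t. ?g e (l e - t)) 0 = (if l e \<le> b1 e then 1 else 0)" if "e \<in> E" for e
  proof -
    have L: "l e > 0" using lpos that by auto
    have "out_slope (\<lambda>t. ?g e (l e - t)) 0 = - ((if b1 e < l e then 1 else 0) - (if l e / 2 < l e then 1 else 0))"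
    proof (rule out_slope_eq)
      show "\<forall>\<^sub>F h in at_right 0. ?g e (l e - (0 + h)) = ?g e (l e - 0) + real_of_int (- ((if b1 e < l e then 1 else 0) - (if l e / 2 < l e then 1 else 0))) * h"
        using SL[OF that L order.refl] by (rule eventually_mono) (simp add: algebra_simps)
    qed
    then show ?thesis using L by auto
  qed
  have divV: "div_fun E src tgt l f (Vtx v) = (\<Sum>e\<in>{e\<in>E. src e = v}. if b1 e \<le> 0 then 1 else 0)
      + (\<Sum>e\<in>{e\<in>E. tgt e = v}. if l e \<le> b1 e then 1 else 0)" for v
  proof -
    have 1: "(\<Sum>e\<in>{e\<in>E. src e = v}. out_slope (?g e) 0) = (\<Sum>e\<in>{e\<in>E. src e = v}. if b1 e \<le> 0 then 1 else 0)"
      by (rule sum.cong) (auto simp: vs)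
    have 2: "(\<Sum>e\<in>{e\<in>E. tgt e = v}. out_slope (\<lambda>t. ?g e (l e - t)) 0) = (\<Sum>e\<in>{e\<in>E. tgt e = v}. if l e \<le> b1 e then 1 else 0)"
      by (rule sum.cong) (auto simp: vt)
    show ?thesis unfolding div_fun_def using 1 2 by simp
  qed
  have rf: "rational_fun E src tgt l f"
    unfolding rational_fun_def
  proof
    fix e assume e: "e \<in> E"
    have L: "l e > 0" using lpos e by auto
    have r: "0 \<le> b1 e" "b1 e \<le> l e" using b1_rng[OF e] by auto
    define B where "B = {0, b1 e, l e / 2, l e}"
    have "finite B" "B \<subseteq> {0..l e}" "0 \<in> B" "l e \<in> B" using L r by (auto simp: B_def)
    from partition_exists[OF this] obtain a k where ak: "a 0 = 0" "a k = l e" "\<forall>i<k. a i < a (Suc i)"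
      "\<forall>i<k. \<forall>b\<in>B. b \<le> a i \<or> a (Suc i) \<le> b" "\<forall>i\<le>k. a i \<in> B" by blast
    define s where "s i = (if b1 e \<le> a i then 1 else 0) - (if l e / 2 \<le> a i then 1 else (0::int))" for i
    have piece: "?g e t = ?g e (a i) + of_int (s i) * (t - a i)" if i: "i < k" and t: "t \<in> {a i..a (Suc i)}" for i t
    proof -
      have "a i \<in> B" "a (Suc i) \<in> B" using ak(5) i by auto
      then have ai: "a i \<in> {0..l e}" "a (Suc i) \<in> {0..l e}" using \<open>B \<subseteq> {0..l e}\<close> by blast+
      have 1: "?g e t = G e t" using ai t e by (intro EF) auto
      have 2: "?g e (a i) = G e (a i)" using ai e by (intro EF) auto
      have bb: "b1 e \<le> a i \<or> a (Suc i) \<le> b1 e" "l e / 2 \<le> a i \<or> a (Suc i) \<le> l e / 2"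
        using ak(4) i by (auto simp: B_def)
      have d1: "ramp (t - b1 e) - ramp (a i - b1 e) = (if b1 e \<le> a i then t - a i else 0)"
        using t bb(1) by (intro ramp_diff) auto
      have d2: "ramp (t - l e / 2) - ramp (a i - l e / 2) = (if l e / 2 \<le> a i then t - a i else 0)"
        using t bb(2) by (intro ramp_diff) auto
      have "G e t = G e (a i) + (ramp (t - b1 e) - ramp (a i - b1 e)) - (ramp (t - l e / 2) - ramp (a i - l e / 2))"
        unfolding G_def by simp
      also have "\<dots> = G e (a i) + of_int (s i) * (t - a i)"
        unfolding d1 d2 s_def by (cases "b1 e \<le> a i"; cases "l e / 2 \<le> a i") simp_all
      finally show ?thesis using 1 2 by simp
    qed
    show "\<exists>(a :: nat \<Rightarrow> real) (k :: nat) (s :: nat \<Rightarrow> int).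
        a 0 = 0 \<and> a k = l e \<and> (\<forall>i<k. a i < a (Suc i)) \<and>
        (\<forall>i<k. \<forall>t\<in>{a i..a (Suc i)}.
            ?g e t = ?g e (a i) + of_int (s i) * (t - a i))"
      using ak piece by blast
  qed
  let ?T = "T_div V E src tgt w l P"
  define D' where "D' x = (if x \<in> tpoints V E l then ?T x + div_fun E src tgt l f x else 0)" for x
  have tp: "x \<in> tpoints V E l \<longleftrightarrow> (\<exists>v\<in>V. x = Vtx v) \<or> (\<exists>e t. x = Pt e t \<and> e \<in> E \<and> 0 < t \<and> t < l e)" for x
    unfolding tpoints_def by auto
  have finP: "finite P" using PE finE by (rule finite_subset)
  have effV: "?T (Vtx v) + div_fun E src tgt l f (Vtx v) \<ge> 0" if v: "v \<in> V" for v
  proof -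
    define s1 where "s1 = (\<Sum>e\<in>{e\<in>E. src e = v}. if b1 e \<le> 0 then 1 else (0::int))"
    define s2 where "s2 = (\<Sum>e\<in>{e\<in>E. tgt e = v}. if l e \<le> b1 e then 1 else (0::int))"
    have s1nn: "s1 \<ge> 0" unfolding s1_def by (rule sum_nonneg) auto
    have s2nn: "s2 \<ge> 0" unfolding s2_def by (rule sum_nonneg) auto
    have dv: "div_fun E src tgt l f (Vtx v) = s1 + s2" unfolding s1_def s2_def divV ..
    have Tv: "?T (Vtx v) = int (deg_in P src tgt v div 2) - 1 + int (w v)"
      using v by (simp add: T_div_def)
    show ?thesis
    proof (cases "deg_in P src tgt v div 2 \<ge> 1 \<or> w v \<ge> 1")
      case True then show ?thesis using Tv dv s1nn s2nn by auto
    next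
      case False
      then have vv0: "v \<noteq> v0" using v0ok by auto
      from False have "deg_in P src tgt v \<le> 1" "w v = 0" by auto
      moreover have "even (deg_in P src tgt v)" using ev v by auto
      ultimately have "deg_in P src tgt v = 0" by (auto elim!: evenE)
      then have "card {e\<in>P. src e = v} = 0" "card {e\<in>P. tgt e = v} = 0" unfolding deg_in_def by auto
      then have noP: "{e\<in>P. src e = v} = {}" "{e\<in>P. tgt e = v} = {}" using finP by auto
      from tight vv0 v obtain e where e: "e \<in> E"
        "(src e = v \<and> \<delta> v = \<delta> (tgt e) + c e) \<or> (tgt e = v \<and> \<delta> v = \<delta> (src e) + c e)" by blast
      have eP: "e \<notin> P" using noP e(2) by blast
      then have ce: "c e = l e / 2" by (simp add: c_def)
      have "s1 + s2 \<ge> 1"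
        using e(2)
      proof
        assume a: "src e = v \<and> \<delta> v = \<delta> (tgt e) + c e"
        then have "b1 e = 0" using ce unfolding b1_def by simp
        then have "(if b1 e \<le> 0 then 1 else (0::int)) \<le> s1" unfolding s1_def
          using a e(1) finE by (intro member_le_sum) auto
        then show ?thesis using \<open>b1 e = 0\<close> s2nn by simp
      next
        assume a: "tgt e = v \<and> \<delta> v = \<delta> (src e) + c e"
        then have "b1 e = l e" using ce unfolding b1_def by simp
        then have "(if l e \<le> b1 e then 1 else (0::int)) \<le> s2" unfolding s2_def
          using a e(1) finE by (intro member_le_sum) auto
        then show ?thesis using \<open>b1 e = l e\<close> s1nn by simp
      qed
      then show ?thesis using Tv dv \<open>w v = 0\<close> by simp
    qed
  qed
  have effP: "?T (Pt e t) + div_fun E src tgt l f (Pt e t) \<ge> 0" if "e \<in> E" "0 < t" "t < l e" for e t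
  proof (cases "e \<in> P")
    case True
    then show ?thesis using divP[OF that] b1P[OF True] by (simp add: T_div_def)
  next
    case False
    then show ?thesis using divP[OF that] that(1) by (simp add: T_div_def)
  qed
  have eff: "effective_on V E l D'"
    unfolding effective_on_def
  proof
    fix x assume x: "x \<in> tpoints V E l"
    then show "D' x \<ge> 0" using tp[of x] effV effP unfolding D'_def by auto
  qed
  have supp: "{x. D' x \<noteq> 0} \<subseteq> Vtx ` V \<union> (\<lambda>e. Pt e (b1 e)) ` E \<union> (\<lambda>e. Pt e (l e / 2)) ` E"
  proof
    fix x assume "x \<in> {x. D' x \<noteq> 0}"
    then have x: "x \<in> tpoints V E l" "?T x + div_fun E src tgt l f x \<noteq> 0" unfolding D'_def by (auto split: if_splits)
    from x(1) have "(\<exists>v\<in>V. x = Vtx v) \<or> (\<exists>e t. x = Pt e t \<and> e \<in> E \<and> 0 < t \<and> t < l e)" using tp[of x] by simp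
    then show "x \<in> Vtx ` V \<union> (\<lambda>e. Pt e (b1 e)) ` E \<union> (\<lambda>e. Pt e (l e / 2)) ` E"
    proof (elim disjE exE conjE bexE)
      fix v assume "v \<in> V" "x = Vtx v" then show ?thesis by auto
    next
      fix e t assume et: "x = Pt e t" "e \<in> E" "0 < t" "t < l e"
      show ?thesis
      proof (rule ccontr)
        assume "\<not> ?thesis"
        then have "t \<noteq> b1 e" "t \<noteq> l e / 2" using et by auto
        then have "?T x + div_fun E src tgt l f x = 0" using divP[OF et(2-4)] et(1)
          by (simp add: T_div_def)
        with x(2) show False by simp
      qed
    qed
  qed
  have div: "is_divisor V E l D'"
    unfolding is_divisor_def
  proof
    show "finite {x. D' x \<noteq> 0}" by (rule finite_subset[OF supp]) (use finV finE in auto)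
    show "{x. D' x \<noteq> 0} \<subseteq> tpoints V E l" unfolding D'_def by auto
  qed
  have le: "lin_equiv V E src tgt l ?T D'"
    unfolding lin_equiv_def using rf by (intro exI[of _ f]) (auto simp: D'_def)
  show ?thesis unfolding rank_neg1_def using div eff le by blast
qed



theorem theorem3p6:
  fixes V :: "'v set" and E :: "'e set" and src tgt :: "'e \<Rightarrow> 'v"
    and w :: "'v \<Rightarrow> nat" and l :: "'e \<Rightarrow> real" and P :: "'e set"
  assumes "tropical_curve V E src tgt w l"
    and "even_subgraph V E src tgt P"
  shows "rank_neg1 V E src tgt l (T_div V E src tgt w l P)
         \<longleftrightarrow> (P = {} \<and> (\<forall>v\<in>V. w v = 0))"
proof
  assume rk: "rank_neg1 V E src tgt l (T_div V E src tgt w l P)"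
  show "P = {} \<and> (\<forall>v\<in>V. w v = 0)"
  proof (rule ccontr)
    assume nc: "\<not> (P = {} \<and> (\<forall>v\<in>V. w v = 0))"
    obtain v0 where v0: "v0 \<in> V" "deg_in P src tgt v0 div 2 \<ge> 1 \<or> w v0 \<ge> 1"
    proof (cases "\<exists>v\<in>V. w v \<noteq> 0")
      case True
      then obtain v where "v \<in> V" "w v \<noteq> 0" by blast
      then show ?thesis using that by auto
    next
      case False
      then have "P \<noteq> {}" using nc by auto
      then obtain e where e: "e \<in> P" by blast
      from assms have PE: "P \<subseteq> E" and ev: "\<forall>v\<in>V. even (deg_in P src tgt v)"
        and finE: "finite E" and ends: "\<forall>e\<in>E. src e \<in> V \<and> tgt e \<in> V"
        unfolding even_subgraph_def tropical_curve_def by auto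
      have finP: "finite P" using PE finE by (rule finite_subset)
      have sV: "src e \<in> V" using e PE ends by auto
      have "e \<in> {e'\<in>P. src e' = src e}" using e by simp
      then have "card {e'\<in>P. src e' = src e} \<noteq> 0" using finP by auto
      then have "deg_in P src tgt (src e) \<noteq> 0" unfolding deg_in_def by simp
      moreover have "even (deg_in P src tgt (src e))" using ev sV by auto
      ultimately have "deg_in P src tgt (src e) div 2 \<ge> 1" by (auto elim!: evenE)
      then show ?thesis using that sV by blast
    qed
    from has_effective[OF assms v0] rk show False by blast
  qed
next
  assume h: "P = {} \<and> (\<forall>v\<in>V. w v = 0)"
  show "rank_neg1 V E src tgt l (T_div V E src tgt w l P)"
    unfolding rank_neg1_def
  proof
    assume "\<exists>D'. is_divisor V E l D' \<and> effective_on V E l D' \<and> lin_equiv V E src tgt l (T_div V E src tgt w l P) D'"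
    then obtain D' f where eff: "effective_on V E l D'" and rf: "rational_fun E src tgt l f"
      and eq: "\<forall>x\<in>tpoints V E l. D' x = T_div V E src tgt w l P x + div_fun E src tgt l f x"
      unfolding lin_equiv_def by blast
    from no_effective[OF assms(1) _ rf] h obtain x where
      x: "x \<in> tpoints V E l" "T_div V E src tgt w l {} x + div_fun E src tgt l f x < 0" by blast
    have "D' x \<ge> 0" using eff x(1) unfolding effective_on_def by blast
    with eq x h show False by auto
  qed
qed


end
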